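(* Let $(\mathcal O,\mathcal D)$ be an antichain duality of $\sigma$-structures such that the members of $\mathcal O$ are cores. Then $|\mathcal D|=1$ if and only if the members of $\mathcal O$ are connected.
   Context: A type $\sigma$ is a finite set of relation symbols with arities; a $\sigma$-structure $\mathbf A$ is a finite set $V(\mathbf A)$ with an $r$-ary relation $R(\mathbf A)$ for each $R\in\sigma$ of arity $r$; homomorphisms are relation-preserving maps and $\mathbf A\to\mathbf B$ means one exists. $\mathbf A$ is a core if every homomorphically equivalent structure has at least as many vertices. $(\mathcal O,\mathcal D)$ is a duality pair if for every $\sigma$-structure $\mathbf A$: $\mathbf A\to\mathbf D$ for some $\mathbf D\in\mathcal D$ iff no $\mathbf T\in\mathcal O$ satisfies $\mathbf T\to\mathbf A$; it is an antichain duality if moreover $\mathcal O\cup\mathcal D$ is an antichain (no homomorphism between two distinct members). $\mathbf A$ is connected if its incidence multigraph (bipartite, with parts $V(\mathbf A)$ and the blocks $(R,(x_1,\dots,x_r))$, $(x_1,\dots,x_r)\in R(\mathbf A)$, with an edge from $x_i$ to the block for each $i$) is connected. *)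

theory Defs
  imports Main
begin

text \<open>A sigma-structure has a finite vertex set (a subset of nat; every
finite structure is isomorphic to one of this form) and, for each symbol R, a set of
tuples (lists of length ar R over the vertex set).\<close>

record 'r struc =
  verts :: "nat set"
  rels :: "'r \<Rightarrow> nat list set"

definition is_struc :: "'r set \<Rightarrow> ('r \<Rightarrow> nat) \<Rightarrow> 'r struc \<Rightarrow> bool" where
  "is_struc S ar A \<longleftrightarrow> finite (verts A)
     \<and> (\<forall>R\<in>S. \<forall>t\<in>rels A R. length t = ar R \<and> set t \<subseteq> verts A)
     \<and> (\<forall>R. R \<notin> S \<longrightarrow> rels A R = {})"

definition is_hom :: "'r set \<Rightarrow> 'r struc \<Rightarrow> 'r struc \<Rightarrow> (nat \<Rightarrow> nat) \<Rightarrow> bool" where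
  "is_hom S A B f \<longleftrightarrow> f ` verts A \<subseteq> verts B
     \<and> (\<forall>R\<in>S. \<forall>t\<in>rels A R. map f t \<in> rels B R)"

definition hom_to :: "'r set \<Rightarrow> 'r struc \<Rightarrow> 'r struc \<Rightarrow> bool" where
  "hom_to S A B \<longleftrightarrow> (\<exists>f. is_hom S A B f)"

definition hom_equiv :: "'r set \<Rightarrow> 'r struc \<Rightarrow> 'r struc \<Rightarrow> bool" where
  "hom_equiv S A B \<longleftrightarrow> hom_to S A B \<and> hom_to S B A"

definition is_core :: "'r set \<Rightarrow> ('r \<Rightarrow> nat) \<Rightarrow> 'r struc \<Rightarrow> bool" where
  "is_core S ar A \<longleftrightarrow> (\<forall>B. is_struc S ar B \<and> hom_equiv S A B \<longrightarrow> card (verts A) \<le> card (verts B))"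

definition duality_pair :: "'r set \<Rightarrow> ('r \<Rightarrow> nat) \<Rightarrow> 'r struc set \<Rightarrow> 'r struc set \<Rightarrow> bool" where
  "duality_pair S ar Obs Dl \<longleftrightarrow> (\<forall>T\<in>Obs. is_struc S ar T) \<and> (\<forall>X\<in>Dl. is_struc S ar X)
     \<and> (\<forall>A. is_struc S ar A \<longrightarrow> ((\<exists>X\<in>Dl. hom_to S A X) \<longleftrightarrow> \<not> (\<exists>T\<in>Obs. hom_to S T A)))"

definition antichain_duality :: "'r set \<Rightarrow> ('r \<Rightarrow> nat) \<Rightarrow> 'r struc set \<Rightarrow> 'r struc set \<Rightarrow> bool" where
  "antichain_duality S ar Obs Dl \<longleftrightarrow> duality_pair S ar Obs Dl
     \<and> (\<forall>A\<in>Obs \<union> Dl. \<forall>B\<in>Obs \<union> Dl. A \<noteq> B \<longrightarrow> \<not> hom_to S A B)"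

text \<open>Incidence multigraph: nodes are vertices (Inl v) and blocks (Inr (R,t));
vertex x_i is adjacent to the block for each position i (parallel edges do not matter
for connectivity).\<close>

definition inc_nodes :: "'r set \<Rightarrow> 'r struc \<Rightarrow> (nat + ('r \<times> nat list)) set" where
  "inc_nodes S A = Inl ` verts A \<union> Inr ` {(R, t). R \<in> S \<and> t \<in> rels A R}"

definition inc_adj :: "'r set \<Rightarrow> 'r struc \<Rightarrow> (nat + ('r \<times> nat list)) \<Rightarrow> (nat + ('r \<times> nat list)) \<Rightarrow> bool" where
  "inc_adj S A x y \<longleftrightarrow>
     (\<exists>v R t. v \<in> verts A \<and> R \<in> S \<and> t \<in> rels A R \<and> v \<in> set t
        \<and> ((x = Inl v \<and> y = Inr (R, t)) \<or> (x = Inr (R, t) \<and> y = Inl v)))"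

definition connected_struc :: "'r set \<Rightarrow> 'r struc \<Rightarrow> bool" where
  "connected_struc S A \<longleftrightarrow> inc_nodes S A \<noteq> {}
     \<and> (\<forall>x\<in>inc_nodes S A. \<forall>y\<in>inc_nodes S A. (inc_adj S A)\<^sup>*\<^sup>* x y)"

end

theory Submission
  imports Defs
begin

lemma inc_adj_sym: "inc_adj S A x y \<Longrightarrow> inc_adj S A y x"
  unfolding inc_adj_def by blast

lemma rtranclp_closed:
  assumes "r\<^sup>*\<^sup>* a b" "\<And>z w. r z w \<Longrightarrow> Q z \<Longrightarrow> Q w" "Q a"
  shows "Q b"
  using assms(1,3) by (induction rule: rtranclp_induct) (auto intro: assms(2))

definition dunion :: "'r struc \<Rightarrow> 'r struc \<Rightarrow> 'r struc" where
  "dunion D1 D2 = \<lparr>verts = (\<lambda>n. 2*n) ` verts D1 \<union> (\<lambda>n. 2*n+1) ` verts D2,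
     rels = (\<lambda>R. map (\<lambda>n. 2*n) ` rels D1 R \<union> map (\<lambda>n. 2*n+1) ` rels D2 R)\<rparr>"

lemma conn_side:
  fixes c1 c2 d :: "nat \<Rightarrow> nat"
  assumes conn: "connected_struc S T"
    and hom: "is_hom S T U f"
    and st1: "is_struc S ar D1"
    and vU: "verts U = c1 ` verts D1 \<union> c2 ` verts D2"
    and rU: "\<And>R. rels U R = map c1 ` rels D1 R \<union> map c2 ` rels D2 R"
    and disj: "\<And>m n. c1 m \<noteq> c2 n"
    and dc: "\<And>n. d (c1 n) = n"
    and x0: "x0 \<in> inc_nodes S T"
    and Q1x0: "case x0 of Inl v \<Rightarrow> f v \<in> c1 ` verts D1 | Inr (R,t) \<Rightarrow> map f t \<in> map c1 ` rels D1 R"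
  shows "hom_to S T D1"
proof -
  define Q where "Q z = (case z of Inl v \<Rightarrow> f v \<in> c1 ` verts D1 | Inr (R,t) \<Rightarrow> map f t \<in> map c1 ` rels D1 R)" for z
  have step: "Q w" if a: "inc_adj S T z w" and q: "Q z" for z w
  proof -
    from a obtain v R t where v: "v \<in> verts T" "R \<in> S" "t \<in> rels T R" "v \<in> set t"
      and zw: "(z = Inl v \<and> w = Inr (R, t)) \<or> (z = Inr (R, t) \<and> w = Inl v)"
      unfolding inc_adj_def by blast
    have mf: "map f t \<in> rels U R" using hom v unfolding is_hom_def by blast
    from zw show ?thesis
    proof
      assume h: "z = Inl v \<and> w = Inr (R, t)"
      then obtain m where m: "f v = c1 m" using q unfolding Q_def by auto
      have "map f t \<notin> map c2 ` rels D2 R"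
      proof
        assume "map f t \<in> map c2 ` rels D2 R"
        then obtain s where "map f t = map c2 s" by blast
        then have "f v \<in> set (map c2 s)" using v(4) by (metis image_eqI list.set_map)
        then obtain n where "f v = c2 n" by auto
        with m disj show False by metis
      qed
      then show ?thesis using mf rU h unfolding Q_def by auto
    next
      assume h: "z = Inr (R, t) \<and> w = Inl v"
      then obtain s where s: "s \<in> rels D1 R" "map f t = map c1 s" using q unfolding Q_def by auto
      have "f v \<in> set (map c1 s)" using v(4) s(2) by (metis image_eqI list.set_map)
      moreover have "set s \<subseteq> verts D1" using st1 s(1) v(2) unfolding is_struc_def by blast
      ultimately show ?thesis using h unfolding Q_def by auto
    qed
  qed
  have all: "Q z" if "z \<in> inc_nodes S T" for z
  proof -
    have "(inc_adj S T)\<^sup>*\<^sup>* x0 z" using conn x0 that unfolding connected_struc_def by blast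
    then show ?thesis using step Q1x0 unfolding Q_def[symmetric]
      by (rule rtranclp_closed) (simp add: Q_def)
  qed
  have "is_hom S T D1 (d \<circ> f)"
    unfolding is_hom_def
  proof (intro conjI ballI subsetI)
    fix y assume "y \<in> (d \<circ> f) ` verts T"
    then obtain v where v: "v \<in> verts T" "y = d (f v)" by auto
    then have "Inl v \<in> inc_nodes S T" unfolding inc_nodes_def by auto
    then have "Q (Inl v)" by (rule all)
    then obtain n where "n \<in> verts D1" "f v = c1 n" unfolding Q_def by auto
    then show "y \<in> verts D1" using v dc by simp
  next
    fix R t assume "R \<in> S" "t \<in> rels T R"
    then have "Inr (R, t) \<in> inc_nodes S T" unfolding inc_nodes_def by auto
    then have "Q (Inr (R, t))" by (rule all)
    then obtain s where s: "s \<in> rels D1 R" "map f t = map c1 s" unfolding Q_def by auto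
    have "map (d \<circ> f) t = map d (map f t)" by simp
    also have "\<dots> = s" using s(2) dc by (simp add: map_idI)
    finally show "map (d \<circ> f) t \<in> rels D1 R" using s(1) by simp
  qed
  then show ?thesis unfolding hom_to_def by blast
qed

lemma dunion_struc:
  assumes "is_struc S ar D1" "is_struc S ar D2"
  shows "is_struc S ar (dunion D1 D2)"
  using assms unfolding is_struc_def dunion_def
  by (auto simp: image_iff) (metis imageI subsetD)+

lemma conn_union:
  assumes conn: "connected_struc S T"
    and hom: "is_hom S T (dunion D1 D2) f"
    and st1: "is_struc S ar D1" and st2: "is_struc S ar D2"
  shows "hom_to S T D1 \<or> hom_to S T D2"
proof -
  obtain x0 where x0: "x0 \<in> inc_nodes S T" using conn unfolding connected_struc_def by blast
  let ?c1 = "\<lambda>n::nat. 2*n" and ?c2 = "\<lambda>n::nat. 2*n+1" and ?d = "\<lambda>n::nat. n div 2"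
  have disj1: "\<And>m n. ?c1 m \<noteq> ?c2 n" by presburger
  have disj2: "\<And>m n. ?c2 m \<noteq> ?c1 n" by presburger
  have "(case x0 of Inl v \<Rightarrow> f v \<in> ?c1 ` verts D1 | Inr (R,t) \<Rightarrow> map f t \<in> map ?c1 ` rels D1 R)
     \<or> (case x0 of Inl v \<Rightarrow> f v \<in> ?c2 ` verts D2 | Inr (R,t) \<Rightarrow> map f t \<in> map ?c2 ` rels D2 R)"
  proof (cases x0)
    case (Inl v)
    then have "v \<in> verts T" using x0 unfolding inc_nodes_def by auto
    then have "f v \<in> verts (dunion D1 D2)" using hom unfolding is_hom_def by blast
    then show ?thesis using Inl unfolding dunion_def by auto
  next
    case (Inr p)
    then obtain R t where p: "x0 = Inr (R, t)" "R \<in> S" "t \<in> rels T R"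
      using x0 unfolding inc_nodes_def by auto
    then have "map f t \<in> rels (dunion D1 D2) R" using hom unfolding is_hom_def by blast
    then show ?thesis using p unfolding dunion_def by auto
  qed
  then show ?thesis
  proof
    assume h: "case x0 of Inl v \<Rightarrow> f v \<in> ?c1 ` verts D1 | Inr (R,t) \<Rightarrow> map f t \<in> map ?c1 ` rels D1 R"
    have "hom_to S T D1"
      by (rule conn_side[where ?c2.0 = "\<lambda>n::nat. 2*n+1" and ?D2.0 = D2 and d = "\<lambda>n::nat. n div 2", OF conn hom st1 _ _ disj1 _ x0 h])
        (auto simp: dunion_def)
    then show ?thesis by blast
  next
    assume h: "case x0 of Inl v \<Rightarrow> f v \<in> ?c2 ` verts D2 | Inr (R,t) \<Rightarrow> map f t \<in> map ?c2 ` rels D2 R"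
    have "hom_to S T D2"
      by (rule conn_side[where ?c2.0 = "\<lambda>n::nat. 2*n" and ?D2.0 = D1 and d = "\<lambda>n::nat. n div 2", OF conn hom st2 _ _ disj2 _ x0 h])
        (auto simp: dunion_def)
    then show ?thesis by blast
  qed
qed

definition subs :: "(nat + ('r \<times> nat list) \<Rightarrow> bool) \<Rightarrow> 'r struc \<Rightarrow> 'r struc" where
  "subs P T = \<lparr>verts = {v \<in> verts T. P (Inl v)}, rels = (\<lambda>R. {t \<in> rels T R. P (Inr (R,t))})\<rparr>"

definition closedP :: "'r set \<Rightarrow> 'r struc \<Rightarrow> (nat + ('r \<times> nat list) \<Rightarrow> bool) \<Rightarrow> bool" where
  "closedP S T P \<longleftrightarrow> (\<forall>z w. inc_adj S T z w \<longrightarrow> (P z \<longleftrightarrow> P w))"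

lemma adj_vt: "v \<in> verts T \<Longrightarrow> R \<in> S \<Longrightarrow> t \<in> rels T R \<Longrightarrow> v \<in> set t \<Longrightarrow> inc_adj S T (Inl v) (Inr (R, t))"
  unfolding inc_adj_def by blast

lemma subs_struc:
  assumes "is_struc S ar T" "closedP S T P"
  shows "is_struc S ar (subs P T)"
  unfolding is_struc_def
proof (intro conjI ballI allI impI)
  show "finite (verts (subs P T))" using assms(1) unfolding is_struc_def subs_def by auto
next
  fix R t assume R: "R \<in> S" and t: "t \<in> rels (subs P T) R"
  then have t': "t \<in> rels T R" "P (Inr (R,t))" unfolding subs_def by auto
  then have "length t = ar R" "set t \<subseteq> verts T" using assms(1) R unfolding is_struc_def by auto
  moreover have "P (Inl v)" if "v \<in> set t" for v
    using assms(2) adj_vt[of v T R S t] that t' R \<open>set t \<subseteq> verts T\<close> unfolding closedP_def by blast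
  ultimately show "length t = ar R" "set t \<subseteq> verts (subs P T)" unfolding subs_def by auto
next
  fix R assume "R \<notin> S"
  then show "rels (subs P T) R = {}" using assms(1) unfolding is_struc_def subs_def by auto
qed

lemma subs_hom: "is_hom S (subs P T) T id"
  unfolding is_hom_def subs_def by auto

lemma subs_bad:
  assumes st: "is_struc S ar T" and cl: "closedP S T P" and b: "b \<in> inc_nodes S T" "\<not> P b"
    and f: "is_hom S T (subs P T) f" and eq: "verts (subs P T) = verts T"
  shows False
proof (cases b)
  case (Inl v)
  then have "v \<in> verts T" using b unfolding inc_nodes_def by auto
  then have "v \<in> verts (subs P T)" using eq by simp
  then show False using b Inl unfolding subs_def by auto
next
  case (Inr p)
  then obtain R t where p: "b = Inr (R, t)" "R \<in> S" "t \<in> rels T R"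
    using b unfolding inc_nodes_def by auto
  show False
  proof (cases t)
    case Nil
    have "map f t \<in> rels (subs P T) R" using f p unfolding is_hom_def by blast
    then show False using Nil p b unfolding subs_def by auto
  next
    case (Cons v vs)
    then have v: "v \<in> set t" by simp
    then have vT: "v \<in> verts T" using st p unfolding is_struc_def by blast
    then have "P (Inl v)" using eq unfolding subs_def by auto
    moreover have "inc_adj S T (Inl v) (Inr (R, t))" using adj_vt[OF vT p(2,3) v] .
    ultimately show False using cl b p unfolding closedP_def by blast
  qed
qed

lemma subs_glue:
  assumes st: "is_struc S ar T" and cl: "closedP S T P"
    and f1: "is_hom S (subs P T) D f1" and f2: "is_hom S (subs (\<lambda>z. \<not> P z) T) D f2"
  shows "hom_to S T D"
proof -
  define g where "g v = (if P (Inl v) then f1 v else f2 v)" for v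
  have "is_hom S T D g"
    unfolding is_hom_def
  proof (intro conjI ballI subsetI)
    fix y assume "y \<in> g ` verts T"
    then obtain v where v: "v \<in> verts T" "y = g v" by auto
    show "y \<in> verts D"
    proof (cases "P (Inl v)")
      case True
      then have "v \<in> verts (subs P T)" using v unfolding subs_def by auto
      then show ?thesis using f1 v True unfolding is_hom_def g_def by auto
    next
      case False
      then have "v \<in> verts (subs (\<lambda>z. \<not> P z) T)" using v unfolding subs_def by auto
      then show ?thesis using f2 v False unfolding is_hom_def g_def by auto
    qed
  next
    fix R t assume R: "R \<in> S" and t: "t \<in> rels T R"
    have sT: "set t \<subseteq> verts T" using st R t unfolding is_struc_def by blast
    have same: "P (Inl v) \<longleftrightarrow> P (Inr (R, t))" if "v \<in> set t" for v
      using cl adj_vt[of v T R S t] that sT R t unfolding closedP_def by blast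
    show "map g t \<in> rels D R"
    proof (cases "P (Inr (R, t))")
      case True
      then have "t \<in> rels (subs P T) R" using t unfolding subs_def by auto
      then have "map f1 t \<in> rels D R" using f1 R unfolding is_hom_def by blast
      moreover have "map g t = map f1 t" using same True unfolding g_def by (simp add: map_eq_conv)
      ultimately show ?thesis by (metis map_eq_conv)
    next
      case False
      then have "t \<in> rels (subs (\<lambda>z. \<not> P z) T) R" using t unfolding subs_def by auto
      then have "map f2 t \<in> rels D R" using f2 R unfolding is_hom_def by blast
      moreover have "map g t = map f2 t" using same False unfolding g_def by (simp add: map_eq_conv)
      ultimately show ?thesis by (metis map_eq_conv)
    qed
  qed
  then show ?thesis unfolding hom_to_def by blast
qed

lemma hom_id: "is_hom S A A id"
  unfolding is_hom_def by auto

lemma hom_comp: "is_hom S A B f \<Longrightarrow> is_hom S B C g \<Longrightarrow> is_hom S A C (g \<circ> f)"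
  unfolding is_hom_def by (auto simp: image_subset_iff) (metis map_map)

lemma hom_to_trans: "hom_to S A B \<Longrightarrow> hom_to S B C \<Longrightarrow> hom_to S A C"
  unfolding hom_to_def using hom_comp by blast

lemma hom_in1: "is_hom S D1 (dunion D1 D2) (\<lambda>n. 2*n)"
  unfolding is_hom_def dunion_def by auto

lemma hom_in2: "is_hom S D2 (dunion D1 D2) (\<lambda>n. 2*n+1)"
  unfolding is_hom_def dunion_def by auto

lemma empty_nodes_hom:
  assumes "is_struc S ar T" "inc_nodes S T = {}"
  shows "is_hom S T D f"
proof -
  have "verts T = {}" using assms(2) unfolding inc_nodes_def by auto
  moreover have "rels T R = {}" if "R \<in> S" for R using assms(2) that unfolding inc_nodes_def by auto
  ultimately show ?thesis unfolding is_hom_def by auto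
qed

theorem lemma5p2:
  fixes S :: "'r set" and ar :: "'r \<Rightarrow> nat" and Obs Dl :: "'r struc set"
  assumes "finite S"
    and "antichain_duality S ar Obs Dl"
    and "\<forall>T\<in>Obs. is_core S ar T"
  shows "card Dl = 1 \<longleftrightarrow> (\<forall>T\<in>Obs. connected_struc S T)"
proof -
  have ac: "\<forall>A\<in>Obs \<union> Dl. \<forall>B\<in>Obs \<union> Dl. A \<noteq> B \<longrightarrow> \<not> hom_to S A B"
    using assms(2) unfolding antichain_duality_def by blast
  have stO: "\<forall>T\<in>Obs. is_struc S ar T" and stD: "\<forall>X\<in>Dl. is_struc S ar X"
    and du: "\<forall>A. is_struc S ar A \<longrightarrow> ((\<exists>X\<in>Dl. hom_to S A X) \<longleftrightarrow> \<not> (\<exists>T\<in>Obs. hom_to S T A))"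
    using assms(2) unfolding antichain_duality_def duality_pair_def by blast+
  have selfD: "\<not> (\<exists>T\<in>Obs. hom_to S T X)" if "X \<in> Dl" for X
  proof -
    have "hom_to S X X" using hom_id unfolding hom_to_def by blast
    then show ?thesis using du stD that by blast
  qed
  show ?thesis
  proof
    assume c: "card Dl = 1"
    then obtain D0 where D0: "Dl = {D0}" by (auto simp: card_Suc_eq)
    show "\<forall>T\<in>Obs. connected_struc S T"
    proof (rule ballI, rule ccontr)
      fix T assume T: "T \<in> Obs" "\<not> connected_struc S T"
      have stT: "is_struc S ar T" using stO T by blast
      show False
      proof (cases "inc_nodes S T = {}")
        case True
        then have "hom_to S T D0" using empty_nodes_hom[OF stT True] unfolding hom_to_def by blast
        then show False using selfD D0 T by blast
      next
        case False
        then obtain x y where x: "x \<in> inc_nodes S T" and y: "y \<in> inc_nodes S T"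
          and nr: "\<not> (inc_adj S T)\<^sup>*\<^sup>* x y" using T(2) unfolding connected_struc_def by blast
        define P where "P = (\<lambda>z. (inc_adj S T)\<^sup>*\<^sup>* x z)"
        have cl1: "closedP S T P"
          unfolding closedP_def
        proof (intro allI impI iffI)
          fix z w assume a: "inc_adj S T z w"
          show "P z \<Longrightarrow> P w" using a unfolding P_def by (meson rtranclp.rtrancl_into_rtrancl)
          show "P w \<Longrightarrow> P z" using inc_adj_sym[OF a] unfolding P_def by (meson rtranclp.rtrancl_into_rtrancl)
        qed
        have cl2: "closedP S T (\<lambda>z. \<not> P z)" using cl1 unfolding closedP_def by blast
        have noobs: "hom_to S (subs Q T) D0"
          if clQ: "closedP S T Q" and b: "b \<in> inc_nodes S T" "\<not> Q b" for Q b
        proof -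
          have st: "is_struc S ar (subs Q T)" by (rule subs_struc[OF stT clQ])
          have "\<not> (\<exists>T'\<in>Obs. hom_to S T' (subs Q T))"
          proof
            assume "\<exists>T'\<in>Obs. hom_to S T' (subs Q T)"
            then obtain T' where T': "T' \<in> Obs" "hom_to S T' (subs Q T)" by blast
            then have "hom_to S T' T" using subs_hom hom_to_trans unfolding hom_to_def by blast
            then have "T' = T" using ac T' T by blast
            then obtain f where f: "is_hom S T (subs Q T) f" using T' unfolding hom_to_def by blast
            have "hom_equiv S T (subs Q T)" using f subs_hom unfolding hom_equiv_def hom_to_def by blast
            then have "card (verts T) \<le> card (verts (subs Q T))" using assms(3) T st
              unfolding is_core_def by blast
            moreover have "verts (subs Q T) \<subseteq> verts T" unfolding subs_def by auto
            moreover have "finite (verts T)" using stT unfolding is_struc_def by blast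
            ultimately have "verts (subs Q T) = verts T" by (meson card_seteq)
            then show False using subs_bad[OF stT clQ b f] by blast
          qed
          then obtain X where "X \<in> Dl" "hom_to S (subs Q T) X" using du st by blast
          then show ?thesis using D0 by blast
        qed
        obtain f1 where f1: "is_hom S (subs P T) D0 f1"
          using noobs[OF cl1 y] nr unfolding hom_to_def P_def by blast
        obtain f2 where f2: "is_hom S (subs (\<lambda>z. \<not> P z) T) D0 f2"
          using noobs[OF cl2 x] unfolding hom_to_def P_def by auto
        have "hom_to S T D0" by (rule subs_glue[OF stT cl1 f1 f2])
        then show False using selfD D0 T by blast
      qed
    qed
  next
    assume conn: "\<forall>T\<in>Obs. connected_struc S T"
    define E where "E = (\<lparr>verts = {}, rels = (\<lambda>R. {})\<rparr> :: 'r struc)"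
    have stE: "is_struc S ar E" unfolding E_def is_struc_def by auto
    have ne: "Dl \<noteq> {}"
    proof
      assume "Dl = {}"
      then obtain T where T: "T \<in> Obs" "hom_to S T E" using du stE by blast
      then obtain f where f: "is_hom S T E f" unfolding hom_to_def by blast
      have "verts T = {}" using f unfolding is_hom_def E_def by auto
      moreover have "rels T R = {}" if "R \<in> S" for R using f that unfolding is_hom_def E_def by auto
      ultimately have "inc_nodes S T = {}" unfolding inc_nodes_def by auto
      then show False using conn T unfolding connected_struc_def by blast
    qed
    have single: "D1 = D2" if d1: "D1 \<in> Dl" and d2: "D2 \<in> Dl" for D1 D2
    proof (rule ccontr)
      assume neq: "D1 \<noteq> D2"
      have st1: "is_struc S ar D1" and st2: "is_struc S ar D2" using stD d1 d2 by blast+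
      have stU: "is_struc S ar (dunion D1 D2)" by (rule dunion_struc[OF st1 st2])
      show False
      proof (cases "\<exists>X\<in>Dl. hom_to S (dunion D1 D2) X")
        case True
        then obtain X where X: "X \<in> Dl" "hom_to S (dunion D1 D2) X" by blast
        have "hom_to S D1 X" using X(2) hom_in1 hom_to_trans unfolding hom_to_def by blast
        then have "D1 = X" using ac d1 X(1) by blast
        have "hom_to S D2 X" using X(2) hom_in2 hom_to_trans unfolding hom_to_def by blast
        then have "D2 = X" using ac d2 X(1) by blast
        then show False using neq \<open>D1 = X\<close> by simp
      next
        case False
        then obtain T f where T: "T \<in> Obs" "is_hom S T (dunion D1 D2) f"
          using du stU unfolding hom_to_def by blast
        have "hom_to S T D1 \<or> hom_to S T D2"
          using conn_union[OF _ T(2) st1 st2] conn T(1) by blast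
        then show False using selfD d1 d2 T(1) by blast
      qed
    qed
    obtain D0 where "D0 \<in> Dl" using ne by blast
    then have "Dl = {D0}" using single by blast
    then show "card Dl = 1" by simp
  qed
qed

end
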